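(* Let $M=(M_{ij})_{1\le i,j\le d}$ be a $d\times d$ real matrix with nonnegative coefficients, acting on row vectors by $x\mapsto xM$, and let $C=[0,\infty)^d\setminus\{0\}$. Then: (i) $M(C)\subset C$ if and only if each row of $M$ has a nonzero coefficient; (ii) if $M(C)\subset C$, then $c(M)<1$ if and only if for every pair $(i,j)$ with $M_{ij}=0$, the whole $j$-th column of $M$ is zero.
   Context: Coordinatewise order on $\mathbb{R}^d$. For $x,y\in C$: $\aleph(x,y)=\sup\{b\ge0\mid bx\le y\}$, $m(x,y)=\aleph(x,y)\aleph(y,x)$. On the set $\Pi(C)$ of open half-lines $\{bx:b>0\}$, $x\in C$, define $d(\bar x,\bar y)=\frac{1-m(x,y)}{1+m(x,y)}$ for representatives $x,y$. When $M(C)\subset C$, $M$ acts on $\Pi(C)$ by $M\cdot\Pi(x)=\Pi(xM)$, and $c(M)=\sup\{d(M\cdot\bar x,M\cdot\bar y)\mid\bar x,\bar y\in\Pi(C)\}$. *)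

theory Defs
  imports "HOL-Analysis.Analysis"
begin

definition posCone :: "(real ^ 'n) set" where
  "posCone = {x. (\<forall>i. 0 \<le> x $ i) \<and> x \<noteq> 0}"

definition aleph :: "real ^ 'n \<Rightarrow> real ^ 'n \<Rightarrow> real" where
  "aleph x y = Sup {b. 0 \<le> b \<and> (\<forall>i. b * x $ i \<le> y $ i)}"

definition mfun :: "real ^ 'n \<Rightarrow> real ^ 'n \<Rightarrow> real" where
  "mfun x y = aleph x y * aleph y x"

text \<open>Distance between the half-lines through x and y, computed on representatives.\<close>
definition hdist :: "real ^ 'n \<Rightarrow> real ^ 'n \<Rightarrow> real" where
  "hdist x y = (1 - mfun x y) / (1 + mfun x y)"

text \<open>Row vectors act by x \<mapsto> x M (vector_matrix_mult); c(M) is the sup of the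
  distance between images of half-lines, taken over representatives.\<close>
definition contr :: "real ^ 'n ^ 'n \<Rightarrow> real" where
  "contr M = Sup {hdist (x v* M) (y v* M) | x y. x \<in> posCone \<and> y \<in> posCone}"

end

theory Submission
  imports Defs
begin

lemma vm_nth: "(x v* M) $ j = (\<Sum>i\<in>UNIV. x $ i * M $ i $ j)"
  by (simp add: vector_matrix_mult_def)

lemma axis_vm: "(axis k (1::real) v* M) $ j = M $ k $ j"
proof -
  have "(\<Sum>i\<in>UNIV. axis k (1::real) $ i * M $ i $ j) = (\<Sum>i\<in>UNIV. if i = k then M $ i $ j else 0)"
    by (rule sum.cong) (auto simp: axis_def)
  then show ?thesis by (simp add: vm_nth)
qed

lemma axis_posCone: "axis k (1::real) \<in> posCone"
proof -
  have "\<forall>i. 0 \<le> axis k (1::real) $ i" by (simp add: axis_def)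
  moreover have "axis k (1::real) \<noteq> 0"
  proof
    assume "axis k (1::real) = 0"
    then have "axis k (1::real) $ k = 0" by simp
    then show False by simp
  qed
  ultimately show ?thesis unfolding posCone_def by blast
qed

lemma posCone_ex: "x \<in> posCone \<Longrightarrow> \<exists>i. 0 < x $ i"
proof -
  assume x: "x \<in> posCone"
  then have "x \<noteq> 0" and n: "\<forall>i. 0 \<le> x $ i" unfolding posCone_def by auto
  then obtain i where "x $ i \<noteq> 0" by (auto simp: vec_eq_iff)
  then have "0 < x $ i" using n by (simp add: order_less_le)
  then show ?thesis by blast
qed

lemma aleph_bdd:
  assumes "x \<in> posCone"
  shows "bdd_above {b. 0 \<le> b \<and> (\<forall>i. b * x $ i \<le> y $ i)}"
proof -
  obtain i where i: "0 < x $ i" using posCone_ex[OF assms] by blast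
  show ?thesis
  proof (rule bdd_aboveI[where M = "y $ i / x $ i"])
    fix b assume "b \<in> {b. 0 \<le> b \<and> (\<forall>i. b * x $ i \<le> y $ i)}"
    then have "b * x $ i \<le> y $ i" by auto
    then show "b \<le> y $ i / x $ i" using i by (simp add: pos_le_divide_eq)
  qed
qed

lemma aleph_lower:
  assumes "x \<in> posCone" "0 \<le> b" "\<forall>i. b * x $ i \<le> y $ i"
  shows "b \<le> aleph x y"
  unfolding aleph_def
  by (rule cSup_upper) (use assms aleph_bdd[OF assms(1)] in auto)

lemma aleph_nonneg:
  assumes "x \<in> posCone" "y \<in> posCone"
  shows "0 \<le> aleph x y"
  by (rule aleph_lower) (use assms in \<open>auto simp: posCone_def\<close>)

lemma aleph_zero:
  assumes "x \<in> posCone" "0 < x $ j" "y $ j = 0" "y \<in> posCone"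
  shows "aleph x y \<le> 0"
  unfolding aleph_def
proof (rule cSup_least)
  show "{b. 0 \<le> b \<and> (\<forall>i. b * x $ i \<le> y $ i)} \<noteq> {}"
    using assms by (auto intro!: exI[of _ 0] simp: posCone_def)
next
  fix b assume "b \<in> {b. 0 \<le> b \<and> (\<forall>i. b * x $ i \<le> y $ i)}"
  then have "b * x $ j \<le> y $ j" by blast
  then have "b * x $ j \<le> 0" using assms(3) by simp
  then show "b \<le> 0" using assms(2) by (simp add: mult_le_0_iff)
qed

lemma hdist_le1:
  assumes "x \<in> posCone" "y \<in> posCone"
  shows "hdist x y \<le> 1"
proof -
  have "0 \<le> mfun x y" unfolding mfun_def using aleph_nonneg[OF assms] aleph_nonneg[OF assms(2,1)] by simp
  then show ?thesis unfolding hdist_def by simp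
qed

lemma one_posCone: "((\<chi> i. 1) :: real ^ 'n) \<in> posCone"
  unfolding posCone_def by (auto simp: vec_eq_iff)

lemma part1:
  fixes M :: "real ^ 'n ^ 'n"
  assumes nonneg: "\<forall>i j. 0 \<le> M $ i $ j"
  shows "(\<forall>x\<in>posCone. x v* M \<in> posCone) \<longleftrightarrow> (\<forall>i. \<exists>j. M $ i $ j \<noteq> 0)"
proof
  assume h: "\<forall>x\<in>posCone. x v* M \<in> posCone"
  show "\<forall>i. \<exists>j. M $ i $ j \<noteq> 0"
  proof
    fix i
    have "axis i 1 v* M \<in> posCone" using h axis_posCone by blast
    then obtain j where "(axis i 1 v* M) $ j \<noteq> 0" unfolding posCone_def by (auto simp: vec_eq_iff)
    then show "\<exists>j. M $ i $ j \<noteq> 0" by (auto simp: axis_vm)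
  qed
next
  assume h: "\<forall>i. \<exists>j. M $ i $ j \<noteq> 0"
  show "\<forall>x\<in>posCone. x v* M \<in> posCone"
  proof
    fix x :: "real ^ 'n" assume x: "x \<in> posCone"
    have xn: "\<forall>i. 0 \<le> x $ i" using x by (simp add: posCone_def)
    obtain i where i: "0 < x $ i" using posCone_ex[OF x] by blast
    obtain j where j: "M $ i $ j \<noteq> 0" using h by blast
    have nn: "\<And>k. 0 \<le> (x v* M) $ k" unfolding vm_nth
      by (rule sum_nonneg) (use xn nonneg in auto)
    have "x $ i * M $ i $ j \<le> (\<Sum>l\<in>UNIV. x $ l * M $ l $ j)"
      by (rule member_le_sum) (use xn nonneg in auto)
    moreover have "0 < M $ i $ j" using j nonneg by (metis less_eq_real_def)
    then have "0 < x $ i * M $ i $ j" using i by simp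
    ultimately have "0 < (x v* M) $ j" unfolding vm_nth by linarith
    then show "x v* M \<in> posCone" using nn unfolding posCone_def by (auto simp: vec_eq_iff intro!: exI[of _ j])
  qed
qed

lemma sum_pos_cone:
  assumes "x \<in> posCone" shows "0 < (\<Sum>i\<in>UNIV. x $ i)"
proof -
  obtain i where i: "0 < x $ i" using posCone_ex[OF assms] by blast
  have "x $ i \<le> (\<Sum>l\<in>UNIV. x $ l)"
    by (rule member_le_sum) (use assms in \<open>auto simp: posCone_def\<close>)
  then show ?thesis using i by linarith
qed

lemma main_bound:
  fixes M :: "real ^ 'n ^ 'n"
  assumes nonneg: "\<forall>i j. 0 \<le> M $ i $ j"
    and cols: "\<forall>i j. M $ i $ j = 0 \<longrightarrow> (\<forall>k. M $ k $ j = 0)"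
    and a: "0 < a" "\<forall>i j. 0 < M $ i $ j \<longrightarrow> a \<le> M $ i $ j"
    and A: "0 < A" "\<forall>i j. M $ i $ j \<le> A"
    and x: "x \<in> posCone" and y: "y \<in> posCone" and xM: "x v* M \<in> posCone"
  shows "a * (\<Sum>i\<in>UNIV. y $ i) / (A * (\<Sum>i\<in>UNIV. x $ i)) \<le> aleph (x v* M) (y v* M)"
proof -
  define sx where "sx = (\<Sum>i\<in>UNIV. x $ i)"
  define sy where "sy = (\<Sum>i\<in>UNIV. y $ i)"
  have sx: "0 < sx" "0 < sy" using sum_pos_cone x y sx_def sy_def by auto
  have xn: "\<forall>i. 0 \<le> x $ i" using x by (simp add: posCone_def)
  have yn: "\<forall>i. 0 \<le> y $ i" using y by (simp add: posCone_def)
  define b where "b = a * sy / (A * sx)"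
  have b0: "0 \<le> b" unfolding b_def using sx a A by simp
  show ?thesis unfolding sx_def[symmetric] sy_def[symmetric] b_def[symmetric]
  proof (rule aleph_lower[OF xM b0], rule allI)
    fix j
    show "b * (x v* M) $ j \<le> (y v* M) $ j"
    proof (cases "\<forall>k. M $ k $ j = 0")
      case True then show ?thesis by (simp add: vm_nth)
    next
      case False
      have pos: "\<forall>k. 0 < M $ k $ j"
      proof
        fix k
        have "M $ k $ j \<noteq> 0" using cols False by blast
        then show "0 < M $ k $ j" using nonneg by (metis less_eq_real_def)
      qed
      have up: "(x v* M) $ j \<le> A * sx" unfolding vm_nth sx_def sum_distrib_left
        apply (rule sum_mono)
        subgoal for i using mult_right_mono[of "M $ i $ j" A "x $ i"] xn A by (simp add: mult.commute)
        done
      have lo: "a * sy \<le> (y v* M) $ j" unfolding vm_nth sy_def sum_distrib_left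
        apply (rule sum_mono)
        subgoal for i using mult_right_mono[of a "M $ i $ j" "y $ i"] yn a pos by (simp add: mult.commute less_imp_le)
        done
      have "b * (x v* M) $ j \<le> b * (A * sx)" using up b0 by (rule mult_left_mono)
      also have "\<dots> = a * sy" unfolding b_def using sx A by simp
      finally show ?thesis using lo by linarith
    qed
  qed
qed

theorem mainTheorem8:
  fixes M :: "real ^ 'n ^ 'n"
  assumes nonneg: "\<forall>i j. 0 \<le> M $ i $ j"
  shows "((\<forall>x\<in>posCone. x v* M \<in> posCone) \<longleftrightarrow> (\<forall>i. \<exists>j. M $ i $ j \<noteq> 0))
    \<and> ((\<forall>x\<in>posCone. x v* M \<in> posCone) \<longrightarrow>
         (contr M < 1 \<longleftrightarrow> (\<forall>i j. M $ i $ j = 0 \<longrightarrow> (\<forall>k. M $ k $ j = 0))))"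
proof (intro conjI impI)
  show "(\<forall>x\<in>posCone. x v* M \<in> posCone) \<longleftrightarrow> (\<forall>i. \<exists>j. M $ i $ j \<noteq> 0)"
    by (rule part1[OF nonneg])
next
  assume cone: "\<forall>x\<in>posCone. x v* M \<in> posCone"
  define S where "S = {hdist (x v* M) (y v* M) | x y. x \<in> posCone \<and> y \<in> posCone}"
  have bdd: "bdd_above S" unfolding S_def
    by (rule bdd_aboveI[where M=1]) (use cone hdist_le1 in blast)
  have ne: "S \<noteq> {}" unfolding S_def using one_posCone by blast
  show "contr M < 1 \<longleftrightarrow> (\<forall>i j. M $ i $ j = 0 \<longrightarrow> (\<forall>k. M $ k $ j = 0))"
  proof
    assume c: "contr M < 1"
    show "\<forall>i j. M $ i $ j = 0 \<longrightarrow> (\<forall>k. M $ k $ j = 0)"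
    proof (rule ccontr)
      assume "\<not> ?thesis"
      then obtain i j k where ij: "M $ i $ j = 0" and kj: "M $ k $ j \<noteq> 0" by blast
      define u where "u = axis i (1::real) v* M"
      define v where "v = axis k (1::real) v* M"
      have u: "u \<in> posCone" and v: "v \<in> posCone"
        using cone axis_posCone u_def v_def by blast+
      have "0 < v $ j" "u $ j = 0" using ij kj nonneg by (auto simp: u_def v_def axis_vm less_eq_real_def)
      then have "aleph v u \<le> 0" using aleph_zero v u by blast
      then have "aleph v u = 0" using aleph_nonneg u v by (meson antisym)
      then have "hdist u v = 1" by (simp add: hdist_def mfun_def)
      moreover have "hdist u v \<in> S" unfolding S_def u_def v_def using axis_posCone by blast
      ultimately have "1 \<le> Sup S" using bdd by (metis cSup_upper)
      then show False using c by (simp add: contr_def S_def)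
    qed
  next
    assume cols: "\<forall>i j. M $ i $ j = 0 \<longrightarrow> (\<forall>k. M $ k $ j = 0)"
    define P where "P = {M $ i $ j | i j. 0 < M $ i $ j}"
    have "P \<subseteq> (\<lambda>(i,j). M $ i $ j) ` UNIV" unfolding P_def by auto
    then have fP: "finite P" by (rule finite_subset) simp
    have rows: "\<forall>i. \<exists>j. M $ i $ j \<noteq> 0" using part1[OF nonneg] cone by blast
    then obtain j0 where "M $ undefined $ j0 \<noteq> 0" by blast
    then have P0: "M $ undefined $ j0 \<in> P" unfolding P_def using nonneg by (force simp: less_eq_real_def)
    define a where "a = Min P"
    have apos: "0 < a" unfolding a_def using fP P0 by (subst Min_gr_iff) (auto simp: P_def)
    have ale: "\<forall>i j. 0 < M $ i $ j \<longrightarrow> a \<le> M $ i $ j" unfolding a_def using Min_le[OF fP] P_def by blast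
    define A where "A = Max ((\<lambda>(i,j). M $ i $ j) ` UNIV)"
    have Ale: "\<forall>i j. M $ i $ j \<le> A" unfolding A_def by (auto intro!: Max_ge)
    have "0 < M $ undefined $ j0" using \<open>M $ undefined $ j0 \<noteq> 0\<close> nonneg by (metis less_eq_real_def)
    then have aA: "a \<le> A" using ale Ale by (meson order_trans)
    then have Apos: "0 < A" using apos by linarith
    define r where "r = (a / A) ^ 2"
    have r0: "0 < r" unfolding r_def using apos Apos by simp
    have bound: "s \<le> (1 - r) / (1 + r)" if "s \<in> S" for s
    proof -
      obtain x y where x: "x \<in> posCone" and y: "y \<in> posCone" and s: "s = hdist (x v* M) (y v* M)"
        using \<open>s \<in> S\<close> unfolding S_def by blast
      define sx where "sx = (\<Sum>i\<in>UNIV. x $ i)"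
      define sy where "sy = (\<Sum>i\<in>UNIV. y $ i)"
      have sx: "0 < sx" "0 < sy" using sum_pos_cone x y sx_def sy_def by auto
      have b1: "a * sy / (A * sx) \<le> aleph (x v* M) (y v* M)"
        using main_bound[OF nonneg cols apos ale Apos Ale x y cone[rule_format, OF x]] unfolding sx_def sy_def .
      have b2: "a * sx / (A * sy) \<le> aleph (y v* M) (x v* M)"
        using main_bound[OF nonneg cols apos ale Apos Ale y x cone[rule_format, OF y]] unfolding sx_def sy_def .
      have "r = (a * sy / (A * sx)) * (a * sx / (A * sy))"
        unfolding r_def using sx Apos by (simp add: power2_eq_square field_simps)
      also have "\<dots> \<le> mfun (x v* M) (y v* M)" unfolding mfun_def
      proof (rule mult_mono[OF b1 b2])
        have "0 \<le> a * sy / (A * sx)" using apos Apos sx by simp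
        then show "0 \<le> aleph (x v* M) (y v* M)" using b1 by linarith
        show "0 \<le> a * sx / (A * sy)" using apos Apos sx by simp
      qed
      finally have rm: "r \<le> mfun (x v* M) (y v* M)" .
      define m where "m = mfun (x v* M) (y v* M)"
      have rm': "r \<le> m" using rm m_def by simp
      have "(1 - m) * (1 + r) \<le> (1 - r) * (1 + m)"
        using rm' r0 by (simp add: algebra_simps)
      then have "(1 - m) / (1 + m) \<le> (1 - r) / (1 + r)"
        using rm' r0 by (simp add: divide_simps)
      then show ?thesis unfolding s hdist_def m_def .
    qed
    have "contr M \<le> (1 - r) / (1 + r)" unfolding contr_def S_def[symmetric]
      by (rule cSup_least[OF ne]) (rule bound)
    also have "\<dots> < 1" using r0 by simp
    finally show "contr M < 1" .
  qed
qed

end
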